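(* Let $J\subset I$, $u\in W$, $w\in W^J$ and $v\in W_J$. Write $uwv=w'v'$ with $w'\in W^J$ and $v'\in W_J$. If $l(uwv)=l(wv)-l(u)$, then $w'\le w$. If moreover $w'=w$, then $\{w^{-1}(\alpha_i): i\in\mathrm{supp}(u)\}\subset\{\alpha_j:j\in J\}$.
   Context: $W$ is the Weyl group of a semisimple group with simple roots $\alpha_i$, $i\in I$, simple reflections $s_i$, length $l$ and Bruhat order $\le$. For $J\subset I$, $W_J$ is the subgroup generated by $\{s_j:j\in J\}$ and $W^J$ the set of minimal length representatives of $W/W_J$. For $u\in W$, $\mathrm{supp}(u)\subset I$ is the set of $i$ such that $s_i$ occurs in some (equivalently any) reduced expression of $u$. *)

theory Defs
  imports "HOL-Analysis.Analysis"
begin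

definition refl :: "'a::real_inner \<Rightarrow> 'a \<Rightarrow> 'a" where
  "refl a x = x - (2 * (x \<bullet> a) / (a \<bullet> a)) *\<^sub>R a"

definition root_system :: "'a::euclidean_space set \<Rightarrow> bool" where
  "root_system \<Phi> \<longleftrightarrow> finite \<Phi> \<and> 0 \<notin> \<Phi> \<and> span \<Phi> = UNIV
     \<and> (\<forall>a\<in>\<Phi>. refl a ` \<Phi> = \<Phi>)
     \<and> (\<forall>a\<in>\<Phi>. \<forall>b\<in>\<Phi>. 2 * (b \<bullet> a) / (a \<bullet> a) \<in> \<int>)
     \<and> (\<forall>a\<in>\<Phi>. \<forall>c. c *\<^sub>R a \<in> \<Phi> \<longrightarrow> c = 1 \<or> c = -1)"

definition simple_system :: "'a::euclidean_space set \<Rightarrow> 'i set \<Rightarrow> ('i \<Rightarrow> 'a) \<Rightarrow> bool" where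
  "simple_system \<Phi> I \<alpha> \<longleftrightarrow> finite I \<and> inj_on \<alpha> I \<and> \<alpha> ` I \<subseteq> \<Phi>
     \<and> independent (\<alpha> ` I)
     \<and> (\<forall>b\<in>\<Phi>. \<exists>c :: 'i \<Rightarrow> int. b = (\<Sum>i\<in>I. of_int (c i) *\<^sub>R \<alpha> i)
            \<and> ((\<forall>i\<in>I. c i \<ge> 0) \<or> (\<forall>i\<in>I. c i \<le> 0)))"

definition sref :: "('i \<Rightarrow> 'a::real_inner) \<Rightarrow> 'i \<Rightarrow> 'a \<Rightarrow> 'a" where
  "sref \<alpha> i = refl (\<alpha> i)"

definition word_eval :: "('i \<Rightarrow> 'a::real_inner) \<Rightarrow> 'i list \<Rightarrow> 'a \<Rightarrow> 'a" where
  "word_eval \<alpha> ws = foldr (\<lambda>i f. sref \<alpha> i \<circ> f) ws id"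

definition weyl :: "('i \<Rightarrow> 'a::real_inner) \<Rightarrow> 'i set \<Rightarrow> ('a \<Rightarrow> 'a) set" where
  "weyl \<alpha> J = word_eval \<alpha> ` lists J"

definition len :: "('i \<Rightarrow> 'a::real_inner) \<Rightarrow> 'i set \<Rightarrow> ('a \<Rightarrow> 'a) \<Rightarrow> nat" where
  "len \<alpha> I w = (LEAST n. \<exists>ws\<in>lists I. length ws = n \<and> word_eval \<alpha> ws = w)"

definition min_reps :: "('i \<Rightarrow> 'a::real_inner) \<Rightarrow> 'i set \<Rightarrow> 'i set \<Rightarrow> ('a \<Rightarrow> 'a) set" where
  "min_reps \<alpha> I J = {w \<in> weyl \<alpha> I. \<forall>v\<in>weyl \<alpha> J. len \<alpha> I w \<le> len \<alpha> I (w \<circ> v)}"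

definition reflections :: "('i \<Rightarrow> 'a::real_inner) \<Rightarrow> 'i set \<Rightarrow> ('a \<Rightarrow> 'a) set" where
  "reflections \<alpha> I = {word_eval \<alpha> ws \<circ> sref \<alpha> i \<circ> word_eval \<alpha> (rev ws) | ws i. ws \<in> lists I \<and> i \<in> I}"

definition bruhat_le :: "('i \<Rightarrow> 'a::real_inner) \<Rightarrow> 'i set \<Rightarrow> ('a \<Rightarrow> 'a) \<Rightarrow> ('a \<Rightarrow> 'a) \<Rightarrow> bool" where
  "bruhat_le \<alpha> I x y \<longleftrightarrow> x \<in> weyl \<alpha> I \<and> y \<in> weyl \<alpha> I \<and>
     (x, y) \<in> {(a, a \<circ> t) | a t. a \<in> weyl \<alpha> I \<and> t \<in> reflections \<alpha> I
                    \<and> len \<alpha> I a < len \<alpha> I (a \<circ> t)}\<^sup>*"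

definition supp :: "('i \<Rightarrow> 'a::real_inner) \<Rightarrow> 'i set \<Rightarrow> ('a \<Rightarrow> 'a) \<Rightarrow> 'i set" where
  "supp \<alpha> I u = {i \<in> I. \<exists>ws\<in>lists I. word_eval \<alpha> ws = u \<and> length ws = len \<alpha> I u \<and> i \<in> set ws}"

end

theory Submission
  imports Defs
begin


lemma refl_linear: "linear (refl a)"
  unfolding refl_def by (rule linearI) (auto simp: inner_add_left algebra_simps add_divide_distrib diff_divide_distrib)

lemma refl_inner: assumes "a \<noteq> 0" shows "refl a x \<bullet> refl a y = x \<bullet> y"
proof -
  have aa: "a \<bullet> a \<noteq> 0" using assms by simp
  show ?thesis unfolding refl_def using aa
    by (simp add: inner_diff_left inner_diff_right inner_commute field_simps)
qed

lemma refl_refl: assumes "a \<noteq> 0" shows "refl a (refl a x) = x"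
proof -
  have aa: "a \<bullet> a \<noteq> 0" using assms by simp
  show ?thesis unfolding refl_def using aa
    by (simp add: inner_diff_left field_simps)
qed

lemma refl_self: assumes "a \<noteq> 0" shows "refl a a = - a"
proof -
  have aa: "a \<bullet> a \<noteq> 0" using assms by simp
  show ?thesis unfolding refl_def using aa by (simp add: algebra_simps scaleR_2)
qed

lemma refl_conj:
  assumes "linear y" "\<And>x z. y x \<bullet> y z = x \<bullet> z"
  shows "y (refl a x) = refl (y a) (y x)"
  unfolding refl_def using assms by (simp add: linear_diff linear_cmul)

lemma word_eval_Nil[simp]: "word_eval \<alpha> [] = id"
  by (simp add: word_eval_def)
lemma word_eval_Cons[simp]: "word_eval \<alpha> (i # ws) = sref \<alpha> i \<circ> word_eval \<alpha> ws"
  by (simp add: word_eval_def)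
lemma word_eval_append: "word_eval \<alpha> (ws @ vs) = word_eval \<alpha> ws \<circ> word_eval \<alpha> vs"
  by (induction ws) auto




definition pcone :: "('i \<Rightarrow> 'a::real_vector) \<Rightarrow> 'i set \<Rightarrow> 'a \<Rightarrow> bool" where
  "pcone \<alpha> S x \<longleftrightarrow> (\<exists>c. (\<forall>i\<in>S. 0 \<le> c i) \<and> x = (\<Sum>i\<in>S. c i *\<^sub>R \<alpha> i))"

locale rs =
  fixes \<Phi> :: "'a::euclidean_space set" and I :: "'i set" and \<alpha> :: "'i \<Rightarrow> 'a"
  assumes rsys: "root_system \<Phi>" and ssys: "simple_system \<Phi> I \<alpha>"
begin

abbreviation P where "P \<equiv> pcone \<alpha> I"
abbreviation W where "W \<equiv> weyl \<alpha> I"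

lemma finI: "finite I" using ssys by (simp add: simple_system_def)
lemma injI: "inj_on \<alpha> I" using ssys by (simp add: simple_system_def)
lemma alpha_root: "i \<in> I \<Longrightarrow> \<alpha> i \<in> \<Phi>" using ssys by (auto simp: simple_system_def)
lemma indep: "independent (\<alpha> ` I)" using ssys by (simp add: simple_system_def)
lemma zero_notin: "0 \<notin> \<Phi>" using rsys by (simp add: root_system_def)
lemma alpha_nz: "i \<in> I \<Longrightarrow> \<alpha> i \<noteq> 0" using alpha_root zero_notin by metis
lemma refl_root: "a \<in> \<Phi> \<Longrightarrow> b \<in> \<Phi> \<Longrightarrow> refl a b \<in> \<Phi>"
  using rsys unfolding root_system_def by blast
lemma reduced: "a \<in> \<Phi> \<Longrightarrow> c *\<^sub>R a \<in> \<Phi> \<Longrightarrow> c = 1 \<or> c = -1"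
  using rsys unfolding root_system_def by blast
lemma root_nz: "x \<in> \<Phi> \<Longrightarrow> x \<noteq> 0" using zero_notin by auto

lemma uniq:
  assumes "(\<Sum>i\<in>I. c i *\<^sub>R \<alpha> i) = (\<Sum>i\<in>I. d i *\<^sub>R \<alpha> i)" "k \<in> I"
  shows "c k = d k"
proof -
  let ?u = "\<lambda>v. c (inv_into I \<alpha> v) - d (inv_into I \<alpha> v)"
  have "(\<Sum>v\<in>\<alpha> ` I. ?u v *\<^sub>R v) = (\<Sum>i\<in>I. ?u (\<alpha> i) *\<^sub>R \<alpha> i)"
    by (rule sum.reindex_cong[OF injI]) auto
  also have "\<dots> = (\<Sum>i\<in>I. (c i - d i) *\<^sub>R \<alpha> i)"
    by (rule sum.cong) (auto simp: inv_into_f_f[OF injI])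
  also have "\<dots> = 0" using assms(1) by (simp add: scaleR_diff_left sum_subtractf)
  finally have "?u (\<alpha> k) = 0"
    using independentD[OF indep, of "\<alpha> ` I" ?u "\<alpha> k"] finI assms(2) by auto
  thus ?thesis using assms(2) by (simp add: inv_into_f_f[OF injI])
qed

lemma delta_sum: "i \<in> I \<Longrightarrow> (\<Sum>k\<in>I. (if k = i then 1 else 0) *\<^sub>R \<alpha> k) = \<alpha> i"
proof -
  assume i: "i \<in> I"
  have "(\<Sum>k\<in>I. (if k = i then 1 else 0) *\<^sub>R \<alpha> k) = (\<Sum>k\<in>I. if k = i then \<alpha> k else 0)"
    by (rule sum.cong) auto
  also have "\<dots> = \<alpha> i" using finI i by (simp add: sum.delta)
  finally show ?thesis .
qed

lemma cone_alpha: "i \<in> I \<Longrightarrow> P (\<alpha> i)"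
  unfolding pcone_def using delta_sum by (intro exI[of _ "\<lambda>k. if k = i then 1 else 0"]) auto

lemma root_sign: "x \<in> \<Phi> \<Longrightarrow> P x \<or> P (- x)"
proof -
  assume "x \<in> \<Phi>"
  then obtain c :: "'i \<Rightarrow> int" where c: "x = (\<Sum>i\<in>I. of_int (c i) *\<^sub>R \<alpha> i)"
     "(\<forall>i\<in>I. c i \<ge> 0) \<or> (\<forall>i\<in>I. c i \<le> 0)"
    using ssys unfolding simple_system_def by blast
  from c(2) show ?thesis
  proof
    assume "\<forall>i\<in>I. c i \<ge> 0" thus ?thesis unfolding pcone_def using c(1)
      by (intro disjI1 exI[of _ "\<lambda>i. of_int (c i)"]) auto
  next
    assume "\<forall>i\<in>I. c i \<le> 0" thus ?thesis unfolding pcone_def using c(1)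
      by (intro disjI2 exI[of _ "\<lambda>i. - of_int (c i)"]) (auto simp: sum_negf)
  qed
qed

lemma cone_both: assumes "P x" "P (- x)" shows "x = 0"
proof -
  obtain c d where c: "\<forall>i\<in>I. 0 \<le> c i" "x = (\<Sum>i\<in>I. c i *\<^sub>R \<alpha> i)"
    and d: "\<forall>i\<in>I. 0 \<le> d i" "- x = (\<Sum>i\<in>I. d i *\<^sub>R \<alpha> i)"
    using assms unfolding pcone_def by blast
  have "(\<Sum>i\<in>I. (c i + d i) *\<^sub>R \<alpha> i) = (\<Sum>i\<in>I. 0 *\<^sub>R \<alpha> i)"
    using c d by (simp add: scaleR_add_left sum.distrib flip: d(2))
  hence "\<forall>k\<in>I. c k + d k = 0" using uniq[of "\<lambda>i. c i + d i" "\<lambda>_. 0"] by auto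
  hence "\<forall>k\<in>I. c k = 0" using c d by force
  thus ?thesis using c by simp
qed

lemma cone_zero: "pcone \<alpha> S 0"
  unfolding pcone_def by (intro exI[of _ "\<lambda>_. 0"]) auto
lemma cone_add: "pcone \<alpha> S x \<Longrightarrow> pcone \<alpha> S y \<Longrightarrow> pcone \<alpha> S (x + y)"
proof -
  assume "pcone \<alpha> S x" "pcone \<alpha> S y"
  then obtain c d where "\<forall>i\<in>S. 0 \<le> c i" "x = (\<Sum>i\<in>S. c i *\<^sub>R \<alpha> i)"
    "\<forall>i\<in>S. 0 \<le> d i" "y = (\<Sum>i\<in>S. d i *\<^sub>R \<alpha> i)" unfolding pcone_def by blast
  thus ?thesis unfolding pcone_def
    by (intro exI[of _ "\<lambda>i. c i + d i"]) (auto simp: scaleR_add_left sum.distrib)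
qed
lemma cone_scale: "pcone \<alpha> S x \<Longrightarrow> 0 \<le> t \<Longrightarrow> pcone \<alpha> S (t *\<^sub>R x)"
proof -
  assume "pcone \<alpha> S x" "0 \<le> t"
  then obtain c where "\<forall>i\<in>S. 0 \<le> c i" "x = (\<Sum>i\<in>S. c i *\<^sub>R \<alpha> i)"
    unfolding pcone_def by blast
  thus ?thesis unfolding pcone_def using \<open>0 \<le> t\<close>
    by (intro exI[of _ "\<lambda>i. t * c i"]) (auto simp: scaleR_sum_right)
qed
lemma cone_sum: "finite S \<Longrightarrow> (\<And>k. k \<in> S \<Longrightarrow> pcone \<alpha> T (x k) \<and> 0 \<le> d k)
   \<Longrightarrow> pcone \<alpha> T (\<Sum>k\<in>S. d k *\<^sub>R x k)"
  by (induction S rule: finite_induct) (auto intro!: cone_add cone_scale cone_zero)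

end



context rs begin

lemma sref_root: "i \<in> I \<Longrightarrow> x \<in> \<Phi> \<Longrightarrow> sref \<alpha> i x \<in> \<Phi>"
  unfolding sref_def using refl_root alpha_root by blast

lemma sref_invol: "i \<in> I \<Longrightarrow> sref \<alpha> i (sref \<alpha> i x) = x"
  unfolding sref_def using refl_refl alpha_nz by blast

lemma sref_invol_o: "i \<in> I \<Longrightarrow> sref \<alpha> i \<circ> sref \<alpha> i = id"
  using sref_invol by auto

lemma sref_self: "i \<in> I \<Longrightarrow> sref \<alpha> i (\<alpha> i) = - \<alpha> i"
  unfolding sref_def using refl_self alpha_nz by blast

lemma word_linear: "set ws \<subseteq> I \<Longrightarrow> linear (word_eval \<alpha> ws)"
  by (induction ws) (auto simp: sref_def intro!: linear_compose[OF _ refl_linear] linear_id)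

lemma word_orth: "set ws \<subseteq> I \<Longrightarrow> word_eval \<alpha> ws x \<bullet> word_eval \<alpha> ws z = x \<bullet> z"
  by (induction ws) (auto simp: sref_def refl_inner alpha_nz)

lemma word_root: "set ws \<subseteq> I \<Longrightarrow> x \<in> \<Phi> \<Longrightarrow> word_eval \<alpha> ws x \<in> \<Phi>"
  by (induction ws) (auto simp: sref_root)

lemma word_rev_inv: "set ws \<subseteq> I \<Longrightarrow> word_eval \<alpha> (rev ws) \<circ> word_eval \<alpha> ws = id"
proof (induction ws)
  case (Cons i ws)
  have "word_eval \<alpha> (rev (i # ws)) \<circ> word_eval \<alpha> (i # ws)
      = word_eval \<alpha> (rev ws) \<circ> (sref \<alpha> i \<circ> sref \<alpha> i) \<circ> word_eval \<alpha> ws"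
    by (simp add: word_eval_append o_assoc)
  also have "\<dots> = word_eval \<alpha> (rev ws) \<circ> word_eval \<alpha> ws"
    using Cons.prems by (simp add: sref_invol_o)
  also have "\<dots> = id" using Cons.IH Cons.prems by (metis insert_subset list.simps(15))
  finally show ?case .
qed simp

lemma word_inv_rev: "set ws \<subseteq> I \<Longrightarrow> word_eval \<alpha> ws \<circ> word_eval \<alpha> (rev ws) = id"
  using word_rev_inv[of "rev ws"] by simp

lemma word_conj:
  assumes "set ws \<subseteq> I"
  shows "word_eval \<alpha> ws \<circ> refl a = refl (word_eval \<alpha> ws a) \<circ> word_eval \<alpha> ws"
  using refl_conj[OF word_linear[OF assms] word_orth[OF assms]] by auto

lemma word_neg: "set ws \<subseteq> I \<Longrightarrow> word_eval \<alpha> ws (- x) = - word_eval \<alpha> ws x"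
  using word_linear linear_neg by blast

lemma F2:
  assumes i: "i \<in> I" and b: "b \<in> \<Phi>" "P b" "b \<noteq> \<alpha> i"
  shows "P (sref \<alpha> i b)"
proof (rule ccontr)
  assume np: "\<not> P (sref \<alpha> i b)"
  have "sref \<alpha> i b \<in> \<Phi>" using sref_root i b by blast
  hence "P (- sref \<alpha> i b)" using root_sign np by blast
  then obtain d where d: "\<forall>k\<in>I. 0 \<le> d k" "- sref \<alpha> i b = (\<Sum>k\<in>I. d k *\<^sub>R \<alpha> k)"
    unfolding pcone_def by blast
  obtain c where c: "\<forall>k\<in>I. 0 \<le> c k" "b = (\<Sum>k\<in>I. c k *\<^sub>R \<alpha> k)"
    using b unfolding pcone_def by blast
  define r where "r = 2 * (b \<bullet> \<alpha> i) / (\<alpha> i \<bullet> \<alpha> i)"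
  have sb: "sref \<alpha> i b = b - r *\<^sub>R \<alpha> i" unfolding sref_def refl_def r_def by simp
  have "(\<Sum>k\<in>I. (c k + d k) *\<^sub>R \<alpha> k) = b - sref \<alpha> i b"
    using c d by (simp add: scaleR_add_left sum.distrib flip: d(2))
  also have "\<dots> = r *\<^sub>R \<alpha> i" using sb by simp
  also have "\<dots> = (\<Sum>k\<in>I. (if k = i then r else 0) *\<^sub>R \<alpha> k)"
  proof -
    have "(\<Sum>k\<in>I. (if k = i then r else 0) *\<^sub>R \<alpha> k) = (\<Sum>k\<in>I. if k = i then r *\<^sub>R \<alpha> k else 0)"
      by (rule sum.cong) auto
    also have "\<dots> = r *\<^sub>R \<alpha> i" using finI i by (simp add: sum.delta)
    finally show ?thesis by simp
  qed
  finally have "\<forall>k\<in>I. c k + d k = (if k = i then r else 0)"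
    using uniq[of "\<lambda>k. c k + d k" "\<lambda>k. if k = i then r else 0"] by blast
  hence cz: "\<forall>k\<in>I. k \<noteq> i \<longrightarrow> c k = 0" using c d by force
  have "b = (\<Sum>k\<in>I. if k = i then c i *\<^sub>R \<alpha> i else 0)"
    unfolding c(2) by (rule sum.cong) (auto simp: cz)
  also have "\<dots> = c i *\<^sub>R \<alpha> i" using finI i by (simp add: sum.delta)
  finally have bi: "b = c i *\<^sub>R \<alpha> i" .
  hence "c i = 1 \<or> c i = -1" using reduced[OF alpha_root[OF i]] b by simp
  moreover have "c i \<ge> 0" using c i by blast
  ultimately have "b = \<alpha> i" using bi by auto
  thus False using b by blast
qed

end



lemma len_le: "ws \<in> lists S \<Longrightarrow> len \<alpha> S (word_eval \<alpha> ws) \<le> length ws"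
  unfolding len_def by (rule Least_le) blast

lemma len_word: "f \<in> weyl \<alpha> S \<Longrightarrow> \<exists>ws\<in>lists S. length ws = len \<alpha> S f \<and> word_eval \<alpha> ws = f"
  unfolding len_def weyl_def
  by (rule LeastI_ex) blast

lemma weyl_comp: "f \<in> weyl \<alpha> S \<Longrightarrow> g \<in> weyl \<alpha> S \<Longrightarrow> f \<circ> g \<in> weyl \<alpha> S"
  unfolding weyl_def by (auto simp flip: word_eval_append intro!: image_eqI)

lemma weyl_sref: "i \<in> S \<Longrightarrow> sref \<alpha> i \<in> weyl \<alpha> S"
  unfolding weyl_def by (rule image_eqI[of _ _ "[i]"]) auto

lemma weyl_id: "id \<in> weyl \<alpha> S"
  unfolding weyl_def by (rule image_eqI[of _ _ "[]"]) auto

lemma weyl_mono: "J \<subseteq> I \<Longrightarrow> weyl \<alpha> J \<subseteq> weyl \<alpha> I"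
  unfolding weyl_def using lists_mono by blast

lemma inv_uniq: "g \<circ> f = id \<Longrightarrow> f \<circ> h = id \<Longrightarrow> g = h"
  by (metis comp_assoc comp_id id_comp)

context rs begin

lemma deletion:
  assumes "set ws \<subseteq> I" "k \<in> I" "P (- (word_eval \<alpha> ws (\<alpha> k)))"
  shows "\<exists>ws'. set ws' \<subseteq> set ws \<and> length ws' < length ws \<and> word_eval \<alpha> ws' = word_eval \<alpha> ws \<circ> sref \<alpha> k"
  using assms
proof (induction ws)
  case Nil
  then show ?case using cone_both[of "\<alpha> k"] cone_alpha alpha_nz by auto
next
  case (Cons i rest)
  let ?y = "word_eval \<alpha> rest"
  have i: "i \<in> I" and rI: "set rest \<subseteq> I" using Cons.prems by auto
  have yr: "?y (\<alpha> k) \<in> \<Phi>" using word_root[OF rI alpha_root[OF Cons.prems(2)]] .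
  show ?case
  proof (cases "P (- ?y (\<alpha> k))")
    case True
    then obtain ws' where "set ws' \<subseteq> set rest" "length ws' < length rest"
      "word_eval \<alpha> ws' = ?y \<circ> sref \<alpha> k" using Cons.IH rI Cons.prems(2) by blast
    thus ?thesis by (intro exI[of _ "i # ws'"]) (auto simp: o_assoc)
  next
    case False
    hence py: "P (?y (\<alpha> k))" using root_sign yr by blast
    have "?y (\<alpha> k) = \<alpha> i"
    proof (rule ccontr)
      assume "?y (\<alpha> k) \<noteq> \<alpha> i"
      hence "P (sref \<alpha> i (?y (\<alpha> k)))" using F2 i yr py by blast
      moreover have "P (- sref \<alpha> i (?y (\<alpha> k)))" using Cons.prems(3) by simp
      ultimately have "sref \<alpha> i (?y (\<alpha> k)) = 0" using cone_both by blast
      thus False using sref_root[OF i yr] root_nz by blast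
    qed
    hence "?y \<circ> sref \<alpha> k = sref \<alpha> i \<circ> ?y"
      using word_conj[OF rI, of "\<alpha> k"] by (simp add: sref_def)
    hence "word_eval \<alpha> (i # rest) \<circ> sref \<alpha> k = ?y"
      by (simp add: o_assoc sref_invol_o[OF i] flip: o_assoc[of "sref \<alpha> i"])
    hence e: "word_eval \<alpha> rest = word_eval \<alpha> (i # rest) \<circ> sref \<alpha> k" by (rule sym)
    have "set rest \<subseteq> set (i#rest)" "length rest < length (i#rest)" by auto
    with e show ?thesis by blast
  qed
qed

lemma weyl_inv: assumes "f \<in> weyl \<alpha> S" "S \<subseteq> I"
  shows "\<exists>g\<in>weyl \<alpha> S. g \<circ> f = id \<and> f \<circ> g = id"
proof -
  obtain ws where ws: "ws \<in> lists S" "word_eval \<alpha> ws = f" using assms unfolding weyl_def by blast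
  hence "set ws \<subseteq> I" using assms by auto
  thus ?thesis using ws word_rev_inv word_inv_rev unfolding weyl_def
    by (intro bexI[of _ "word_eval \<alpha> (rev ws)"]) auto
qed

lemma len_inv: assumes "f \<in> W" "g \<circ> f = id" shows "f \<circ> g = id" "len \<alpha> I g = len \<alpha> I f"
proof -
  obtain ws where ws: "ws \<in> lists I" "length ws = len \<alpha> I f" "word_eval \<alpha> ws = f"
    using len_word[OF assms(1)] by blast
  have fh: "f \<circ> word_eval \<alpha> (rev ws) = id" using ws word_inv_rev by auto
  have g: "g = word_eval \<alpha> (rev ws)" using inv_uniq[OF assms(2) fh] .
  thus fg: "f \<circ> g = id" using fh by simp
  have g1: "len \<alpha> I g \<le> len \<alpha> I f" using g ws len_le[of "rev ws" I \<alpha>] by (simp add: in_lists_conv_set)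
  have gW: "g \<in> W" using g ws unfolding weyl_def by auto
  obtain vs where vs: "vs \<in> lists I" "length vs = len \<alpha> I g" "word_eval \<alpha> vs = g"
    using len_word[OF gW] by blast
  have gh: "g \<circ> word_eval \<alpha> (rev vs) = id" using vs word_inv_rev by auto
  have "f = word_eval \<alpha> (rev vs)" using inv_uniq[OF fg gh] .
  hence "len \<alpha> I f \<le> len \<alpha> I g" using vs len_le[of "rev vs" I \<alpha>] by (simp add: in_lists_conv_set)
  thus "len \<alpha> I g = len \<alpha> I f" using g1 by simp
qed

lemma len_comp: assumes "f \<in> W" "g \<in> W" shows "len \<alpha> I (f \<circ> g) \<le> len \<alpha> I f + len \<alpha> I g"
proof -
  obtain ws where ws: "ws \<in> lists I" "length ws = len \<alpha> I f" "word_eval \<alpha> ws = f"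
    using len_word[OF assms(1)] by blast
  obtain vs where vs: "vs \<in> lists I" "length vs = len \<alpha> I g" "word_eval \<alpha> vs = g"
    using len_word[OF assms(2)] by blast
  show ?thesis using len_le[of "ws @ vs" I \<alpha>] ws vs by (simp add: word_eval_append)
qed

lemma E_neg: assumes "f \<in> W" "k \<in> I" "P (- f (\<alpha> k))"
  shows "len \<alpha> I (f \<circ> sref \<alpha> k) < len \<alpha> I f"
proof -
  obtain ws where ws: "ws \<in> lists I" "length ws = len \<alpha> I f" "word_eval \<alpha> ws = f"
    using len_word[OF assms(1)] by blast
  then obtain ws' where "set ws' \<subseteq> set ws" "length ws' < length ws"
    "word_eval \<alpha> ws' = f \<circ> sref \<alpha> k" using deletion[of ws k] assms by auto
  thus ?thesis using len_le[of ws' I \<alpha>] ws by fastforce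
qed

lemma E_pos: assumes "f \<in> W" "k \<in> I" "P (f (\<alpha> k))"
  shows "len \<alpha> I f < len \<alpha> I (f \<circ> sref \<alpha> k)"
proof -
  let ?g = "f \<circ> sref \<alpha> k"
  have gW: "?g \<in> W" using weyl_comp[OF assms(1) weyl_sref[OF assms(2)]] .
  obtain ws where ws: "ws \<in> lists I" "word_eval \<alpha> ws = f" using assms(1) unfolding weyl_def by blast
  have "?g (\<alpha> k) = - f (\<alpha> k)" using ws word_neg[of ws] sref_self[OF assms(2)] by auto
  hence "P (- ?g (\<alpha> k))" using assms(3) by simp
  from E_neg[OF gW assms(2) this] show ?thesis
    by (simp add: o_assoc[symmetric] sref_invol_o[OF assms(2)] del: o_apply)
qed

end



context rs begin

lemma weyl_set: "f \<in> weyl \<alpha> S \<Longrightarrow> S \<subseteq> I \<Longrightarrow> \<exists>ws. set ws \<subseteq> I \<and> word_eval \<alpha> ws = f"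
  unfolding weyl_def by auto

lemma weyl_linear: "f \<in> W \<Longrightarrow> linear f"
proof -
  assume "f \<in> W" then obtain ws where "set ws \<subseteq> I" "word_eval \<alpha> ws = f" using weyl_set by blast
  thus ?thesis using word_linear by blast
qed
lemma weyl_root: "f \<in> W \<Longrightarrow> x \<in> \<Phi> \<Longrightarrow> f x \<in> \<Phi>"
proof -
  assume "f \<in> W" "x \<in> \<Phi>" then obtain ws where "set ws \<subseteq> I" "word_eval \<alpha> ws = f" using weyl_set by blast
  thus ?thesis using word_root \<open>x \<in> \<Phi>\<close> by blast
qed
lemma weyl_conj: "f \<in> W \<Longrightarrow> f \<circ> refl a = refl (f a) \<circ> f"
proof -
  assume "f \<in> W" then obtain ws where "set ws \<subseteq> I" "word_eval \<alpha> ws = f" using weyl_set by blast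
  thus ?thesis using word_conj by blast
qed
lemma weyl_neg: "f \<in> W \<Longrightarrow> f (- x) = - f x"
  using weyl_linear linear_neg by metis

end

locale rsJ = rs +
  fixes J
  assumes JI: "J \<subseteq> I"
begin

abbreviation WJ where "WJ \<equiv> weyl \<alpha> J"
definition Pj where "Pj a \<longleftrightarrow> (\<forall>j\<in>J. P (a (\<alpha> j)))"

lemma finJ: "finite J" using finite_subset[OF JI finI] .
lemma WJ_W: "f \<in> WJ \<Longrightarrow> f \<in> W" using weyl_mono[OF JI] by blast

lemma sref_span: "k \<in> J \<Longrightarrow> x \<in> span (\<alpha> ` J) \<Longrightarrow> sref \<alpha> k x \<in> span (\<alpha> ` J)"
proof -
  assume "k \<in> J" "x \<in> span (\<alpha> ` J)"
  moreover have "\<alpha> k \<in> span (\<alpha> ` J)" using \<open>k \<in> J\<close> by (intro span_base) auto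
  ultimately show ?thesis unfolding sref_def refl_def by (intro span_diff[OF _ span_scale])
qed

lemma WJ_span: "f \<in> WJ \<Longrightarrow> x \<in> span (\<alpha> ` J) \<Longrightarrow> f x \<in> span (\<alpha> ` J)"
proof -
  assume "f \<in> WJ" "x \<in> span (\<alpha> ` J)"
  then obtain ws where "ws \<in> lists J" "f = word_eval \<alpha> ws" unfolding weyl_def by blast
  thus ?thesis using \<open>x \<in> span (\<alpha> ` J)\<close>
    by (induction ws arbitrary: f) (auto intro: sref_span)
qed

lemma cone_J:
  assumes "P x" "x \<in> span (\<alpha> ` J)"
  shows "\<exists>c. (\<forall>j\<in>J. 0 \<le> c j) \<and> x = (\<Sum>j\<in>J. c j *\<^sub>R \<alpha> j)"
proof -
  obtain c where c: "\<forall>i\<in>I. 0 \<le> c i" "x = (\<Sum>i\<in>I. c i *\<^sub>R \<alpha> i)" using assms(1) unfolding pcone_def by blast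
  obtain u where u: "x = (\<Sum>v\<in>\<alpha> ` J. u v *\<^sub>R v)"
    using assms(2) span_finite[of "\<alpha> ` J"] finJ by auto
  have injJ: "inj_on \<alpha> J" using inj_on_subset[OF injI JI] .
  define e where "e k = (if k \<in> J then u (\<alpha> k) else 0)" for k
  have "x = (\<Sum>j\<in>J. u (\<alpha> j) *\<^sub>R \<alpha> j)" using u sum.reindex[OF injJ, of "\<lambda>v. u v *\<^sub>R v"] by simp
  also have "\<dots> = (\<Sum>j\<in>J. e j *\<^sub>R \<alpha> j)" by (rule sum.cong) (auto simp: e_def)
  also have "\<dots> = (\<Sum>j\<in>I. e j *\<^sub>R \<alpha> j)"
    by (rule sum.mono_neutral_left[OF finI JI]) (auto simp: e_def)
  finally have xe: "(\<Sum>i\<in>I. c i *\<^sub>R \<alpha> i) = (\<Sum>j\<in>I. e j *\<^sub>R \<alpha> j)" using c(2) by simp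
  have "\<forall>k\<in>I. c k = e k" using uniq[OF xe] by blast
  hence ce: "\<forall>k\<in>I - J. c k = 0" by (auto simp: e_def)
  have "x = (\<Sum>j\<in>J. c j *\<^sub>R \<alpha> j)" unfolding c(2)
    by (rule sum.mono_neutral_right[OF finI JI]) (auto simp: ce)
  thus ?thesis using c(1) JI by blast
qed

lemma WJ_out:
  assumes "f \<in> WJ" "g \<in> \<Phi>" "P g" "g \<notin> span (\<alpha> ` J)"
  shows "P (f g)"
proof -
  obtain ws where ws: "ws \<in> lists J" "f = word_eval \<alpha> ws" using assms(1) unfolding weyl_def by blast
  have "ws \<in> lists J \<Longrightarrow> P (word_eval \<alpha> ws g) \<and> word_eval \<alpha> ws g \<in> \<Phi> \<and> word_eval \<alpha> ws g \<notin> span (\<alpha> ` J)"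
  proof (induction ws)
    case Nil thus ?case using assms by simp
  next
    case (Cons k ws)
    let ?y = "word_eval \<alpha> ws g"
    have k: "k \<in> J" "k \<in> I" using Cons.prems JI by auto
    have IH: "P ?y" "?y \<in> \<Phi>" "?y \<notin> span (\<alpha> ` J)" using Cons by auto
    have "\<alpha> k \<in> span (\<alpha> ` J)" using k(1) by (intro span_base) simp
    hence ne: "?y \<noteq> \<alpha> k" using IH(3) by auto
    have "P (sref \<alpha> k ?y)" using F2[OF k(2) IH(2) IH(1) ne] .
    moreover have "sref \<alpha> k ?y \<in> \<Phi>" using sref_root k IH by blast
    moreover have "sref \<alpha> k ?y \<notin> span (\<alpha> ` J)"
    proof
      assume "sref \<alpha> k ?y \<in> span (\<alpha> ` J)"
      hence "sref \<alpha> k (sref \<alpha> k ?y) \<in> span (\<alpha> ` J)" by (rule sref_span[OF k(1)])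
      thus False using sref_invol[OF k(2)] IH(3) by simp
    qed
    ultimately show ?case by simp
  qed
  thus ?thesis using ws by simp
qed

lemma minrep_Pj: assumes "w \<in> min_reps \<alpha> I J" shows "Pj w"
  unfolding Pj_def
proof
  fix j assume j: "j \<in> J"
  hence jI: "j \<in> I" using JI by auto
  have wW: "w \<in> W" using assms unfolding min_reps_def by blast
  show "P (w (\<alpha> j))"
  proof (rule ccontr)
    assume "\<not> P (w (\<alpha> j))"
    hence "P (- w (\<alpha> j))" using root_sign weyl_root[OF wW alpha_root[OF jI]] by blast
    hence "len \<alpha> I (w \<circ> sref \<alpha> j) < len \<alpha> I w" using E_neg[OF wW jI] by blast
    moreover have "len \<alpha> I w \<le> len \<alpha> I (w \<circ> sref \<alpha> j)"
      using assms weyl_sref[OF j] unfolding min_reps_def by blast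
    ultimately show False by simp
  qed
qed

lemma unique_rep:
  assumes aW: "a \<in> W" and cJ: "c \<in> WJ" and pa: "Pj a" and pac: "Pj (a \<circ> c)"
  shows "c = id"
proof -
  obtain ws where ws: "ws \<in> lists J" "length ws = len \<alpha> J c" "word_eval \<alpha> ws = c"
    using len_word[OF cJ] by blast
  show ?thesis
  proof (cases ws rule: rev_exhaust)
    case Nil thus ?thesis using ws by simp
  next
    case (snoc ws0 j)
    have j: "j \<in> J" "j \<in> I" using ws snoc JI by auto
    have ws0J: "set ws0 \<subseteq> J" using ws snoc by auto
    hence ws0I: "set ws0 \<subseteq> I" using JI by auto
    let ?c' = "word_eval \<alpha> ws0"
    have cc: "c = ?c' \<circ> sref \<alpha> j" using ws snoc by (simp add: word_eval_append)
    have cW: "c \<in> W" using WJ_W[OF cJ] .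
    have croot: "c (\<alpha> j) \<in> \<Phi>" using weyl_root[OF cW alpha_root[OF j(2)]] .
    have negc: "P (- c (\<alpha> j))"
    proof (rule ccontr)
      assume "\<not> P (- c (\<alpha> j))"
      hence "P (c (\<alpha> j))" using root_sign croot by blast
      moreover have "c (\<alpha> j) = - ?c' (\<alpha> j)"
      proof -
        have "c (\<alpha> j) = ?c' (sref \<alpha> j (\<alpha> j))" using cc by simp
        also have "\<dots> = ?c' (- \<alpha> j)" using sref_self[OF j(2)] by simp
        also have "\<dots> = - ?c' (\<alpha> j)" using word_neg[OF ws0I] by blast
        finally show ?thesis .
      qed
      ultimately have "P (- ?c' (\<alpha> j))" by simp
      then obtain ws' where ws': "set ws' \<subseteq> set ws0" "length ws' < length ws0"
        "word_eval \<alpha> ws' = c" using deletion[OF ws0I j(2)] cc by blast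
      hence "ws' \<in> lists J" using ws0J by auto
      hence "len \<alpha> J c \<le> length ws'" using len_le[of ws' J \<alpha>] ws' by simp
      moreover have "length ws = Suc (length ws0)" using snoc by simp
      ultimately show False using ws' ws by linarith
    qed
    have "- c (\<alpha> j) \<in> span (\<alpha> ` J)"
      using WJ_span[OF cJ span_base[of "\<alpha> j" "\<alpha> ` J"]] j span_neg by blast
    then obtain d where d: "\<forall>k\<in>J. 0 \<le> d k" "- c (\<alpha> j) = (\<Sum>k\<in>J. d k *\<^sub>R \<alpha> k)"
      using cone_J[OF negc] by blast
    have "a (- c (\<alpha> j)) = (\<Sum>k\<in>J. d k *\<^sub>R a (\<alpha> k))"
      using d(2) weyl_linear[OF aW] by (simp add: linear_sum linear_scale)
    hence "P (a (- c (\<alpha> j)))" using cone_sum[OF finJ, where x="\<lambda>k. a (\<alpha> k)" and T=I and d=d] pa d(1)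
      unfolding Pj_def by simp
    hence "P (- a (c (\<alpha> j)))" using weyl_neg[OF aW] by simp
    moreover have "P (a (c (\<alpha> j)))" using pac j unfolding Pj_def by simp
    ultimately have "a (c (\<alpha> j)) = 0" using cone_both by blast
    thus ?thesis using weyl_root[OF aW croot] root_nz by metis
  qed
qed

end



context rsJ begin

abbreviation R where "R \<equiv> {(a, a \<circ> t) | a t. a \<in> weyl \<alpha> I \<and> t \<in> reflections \<alpha> I \<and> len \<alpha> I a < len \<alpha> I (a \<circ> t)}"

lemma step:
  assumes i: "i \<in> I" and aW: "a \<in> W" and pa: "Pj a" and bJ: "b \<in> WJ"
    and lt: "len \<alpha> I (sref \<alpha> i \<circ> (a \<circ> b)) < len \<alpha> I (a \<circ> b)"
  shows "\<exists>a' b'. a' \<in> W \<and> Pj a' \<and> b' \<in> WJ \<and> sref \<alpha> i \<circ> (a \<circ> b) = a' \<circ> b' \<and>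
     ((a' = a \<and> (\<exists>j\<in>J. inv a (\<alpha> i) = \<alpha> j)) \<or> (len \<alpha> I a' < len \<alpha> I a \<and> (a', a) \<in> R))"
proof -
  have bW: "b \<in> W" using WJ_W[OF bJ] .
  have si: "sref \<alpha> i \<in> W" using weyl_sref[OF i] .
  obtain ai where ai: "ai \<in> W" "ai \<circ> a = id" "a \<circ> ai = id" using weyl_inv[OF aW] by blast
  obtain bi where bi: "bi \<in> WJ" "bi \<circ> b = id" "b \<circ> bi = id" using weyl_inv[OF bJ JI] by blast
  have biW: "bi \<in> W" using WJ_W[OF bi(1)] .
  let ?x = "a \<circ> b"
  let ?g = "bi \<circ> ai"
  have xW: "?x \<in> W" using weyl_comp[OF aW bW] .
  have gW: "?g \<in> W" using weyl_comp[OF biW ai(1)] .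
  have gx: "?g \<circ> ?x = id" using ai bi by (metis comp_assoc id_comp)
  have lg: "len \<alpha> I ?g = len \<alpha> I ?x" using len_inv(2)[OF xW gx] .
  have sxW: "sref \<alpha> i \<circ> ?x \<in> W" using weyl_comp[OF si xW] .
  have "(?g \<circ> sref \<alpha> i) \<circ> (sref \<alpha> i \<circ> ?x) = id"
    using gx sref_invol_o[OF i] by (metis comp_assoc id_comp)
  hence lgs: "len \<alpha> I (?g \<circ> sref \<alpha> i) = len \<alpha> I (sref \<alpha> i \<circ> ?x)" using len_inv(2)[OF sxW] by blast
  have groot: "?g (\<alpha> i) \<in> \<Phi>" using weyl_root[OF gW alpha_root[OF i]] .
  have ng: "P (- ?g (\<alpha> i))"
  proof (rule ccontr)
    assume "\<not> P (- ?g (\<alpha> i))"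
    hence "P (?g (\<alpha> i))" using root_sign groot by blast
    hence h: "len \<alpha> I ?g < len \<alpha> I (?g \<circ> sref \<alpha> i)" by (rule E_pos[OF gW i])
    show False using h lt unfolding lgs lg by (rule less_asym)
  qed
  define \<gamma> where "\<gamma> = ai (\<alpha> i)"
  have groot: "\<gamma> \<in> \<Phi>" unfolding \<gamma>_def using weyl_root[OF ai(1) alpha_root[OF i]] .
  have inva: "inv a = ai" using inv_unique_comp[OF ai(3) ai(2)] .
  show ?thesis
  proof (cases "P (- \<gamma>)")
    case True
    let ?a' = "sref \<alpha> i \<circ> a"
    have a'W: "?a' \<in> W" using weyl_comp[OF si aW] .
    have pa': "Pj ?a'" unfolding Pj_def
    proof
      fix j assume j: "j \<in> J"
      hence jI: "j \<in> I" using JI by auto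
      have r: "a (\<alpha> j) \<in> \<Phi>" using weyl_root[OF aW alpha_root[OF jI]] .
      have p: "P (a (\<alpha> j))" using pa j unfolding Pj_def by blast
      have "a (\<alpha> j) \<noteq> \<alpha> i"
      proof
        assume "a (\<alpha> j) = \<alpha> i"
        hence "\<gamma> = \<alpha> j" unfolding \<gamma>_def using ai(2) by (metis comp_apply id_apply)
        hence "P (- \<alpha> j)" using True by simp
        hence "\<alpha> j = 0" using cone_alpha[OF jI] cone_both by blast
        thus False using alpha_nz[OF jI] by simp
      qed
      from F2[OF i r p this] show "P (?a' (\<alpha> j))" by simp
    qed
    have "len \<alpha> I (ai \<circ> sref \<alpha> i) < len \<alpha> I ai"
      using E_neg[OF ai(1) i] True unfolding \<gamma>_def by simp
    moreover have "(ai \<circ> sref \<alpha> i) \<circ> ?a' = id"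
      using ai(2) sref_invol_o[OF i] by (metis comp_assoc id_comp)
    hence "len \<alpha> I (ai \<circ> sref \<alpha> i) = len \<alpha> I ?a'" using len_inv(2)[OF a'W] by blast
    moreover have "len \<alpha> I ai = len \<alpha> I a" using len_inv(2)[OF aW ai(2)] .
    ultimately have llt: "len \<alpha> I ?a' < len \<alpha> I a" by simp
    obtain ws where ws: "ws \<in> lists I" "word_eval \<alpha> ws = ?a'"
      using a'W unfolding weyl_def by (metis imageE)
    define t where "t = word_eval \<alpha> (rev ws) \<circ> sref \<alpha> i \<circ> word_eval \<alpha> (rev (rev ws))"
    have wsI: "set ws \<subseteq> I" using ws(1) by (simp add: in_lists_conv_set subset_iff)
    have rI: "rev ws \<in> lists I" using wsI by (simp add: in_lists_conv_set subset_iff)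
    have tR: "t \<in> reflections \<alpha> I" unfolding reflections_def mem_Collect_eq
      by (rule exI[of _ "rev ws"], rule exI[of _ i]) (simp add: t_def rI i)
    have inv1: "word_eval \<alpha> ws (word_eval \<alpha> (rev ws) y) = y" for y
      using fun_cong[OF word_inv_rev[OF wsI], of y] by simp
    have at0: "word_eval \<alpha> ws \<circ> t = a"
    proof (rule ext)
      fix x
      have "(word_eval \<alpha> ws \<circ> t) x = word_eval \<alpha> ws (word_eval \<alpha> (rev ws) (sref \<alpha> i (word_eval \<alpha> ws x)))"
        by (simp add: t_def)
      also have "\<dots> = sref \<alpha> i (word_eval \<alpha> ws x)" by (rule inv1)
      also have "\<dots> = a x" using ws(2) sref_invol[OF i] by simp
      finally show "(word_eval \<alpha> ws \<circ> t) x = a x" .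
    qed
    have at: "?a' \<circ> t = a" using at0 unfolding ws(2) .
    have llt': "len \<alpha> I ?a' < len \<alpha> I (?a' \<circ> t)" using llt unfolding at .
    have "(?a', ?a' \<circ> t) \<in> R" unfolding mem_Collect_eq
      by (intro exI[of _ ?a'] exI[of _ t] conjI refl a'W tR llt')
    hence Rm: "(?a', a) \<in> R" unfolding at .
    have eq: "sref \<alpha> i \<circ> (a \<circ> b) = ?a' \<circ> b" by (rule o_assoc)
    show ?thesis using a'W pa' bJ eq llt Rm
      by (intro exI[of _ ?a'] exI[of _ b] conjI disjI2) assumption+
  next
    case False
    hence pg: "P \<gamma>" using root_sign groot by blast
    have "?g (\<alpha> i) = bi \<gamma>" unfolding \<gamma>_def by simp
    hence nbg: "P (- bi \<gamma>)" using ng by simp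
    have gspan: "\<gamma> \<in> span (\<alpha> ` J)"
    proof (rule ccontr)
      assume "\<gamma> \<notin> span (\<alpha> ` J)"
      hence "P (bi \<gamma>)" using WJ_out[OF bi(1) groot pg] by blast
      hence "bi \<gamma> = 0" using nbg cone_both by blast
      thus False using weyl_root[OF biW groot] root_nz by metis
    qed
    obtain c where c: "\<forall>j\<in>J. 0 \<le> c j" "\<gamma> = (\<Sum>j\<in>J. c j *\<^sub>R \<alpha> j)" using cone_J[OF pg gspan] by blast
    have "\<forall>j\<in>J. \<exists>e. (\<forall>k\<in>I. 0 \<le> e k) \<and> a (\<alpha> j) = (\<Sum>k\<in>I. e k *\<^sub>R \<alpha> k)"
      using pa unfolding Pj_def pcone_def by blast
    then obtain E where E: "\<And>j. j \<in> J \<Longrightarrow> (\<forall>k\<in>I. 0 \<le> E j k) \<and> a (\<alpha> j) = (\<Sum>k\<in>I. E j k *\<^sub>R \<alpha> k)"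
      by metis
    have "a \<gamma> = \<alpha> i" unfolding \<gamma>_def using ai(3) by (metis comp_apply id_apply)
    hence "\<alpha> i = (\<Sum>j\<in>J. c j *\<^sub>R a (\<alpha> j))"
      using c(2) weyl_linear[OF aW] by (simp add: linear_sum linear_scale)
    also have "\<dots> = (\<Sum>j\<in>J. c j *\<^sub>R (\<Sum>k\<in>I. E j k *\<^sub>R \<alpha> k))"
      by (rule sum.cong) (auto simp: E)
    also have "\<dots> = (\<Sum>k\<in>I. (\<Sum>j\<in>J. c j * E j k) *\<^sub>R \<alpha> k)"
      by (simp add: scaleR_sum_right scaleR_sum_left sum.swap[of _ J I])
    finally have eq: "(\<Sum>k\<in>I. (if k = i then 1 else 0) *\<^sub>R \<alpha> k) = (\<Sum>k\<in>I. (\<Sum>j\<in>J. c j * E j k) *\<^sub>R \<alpha> k)"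
      using delta_sum[OF i] by simp
    have coef: "\<And>k. k \<in> I \<Longrightarrow> k \<noteq> i \<Longrightarrow> (\<Sum>j\<in>J. c j * E j k) = 0"
      using uniq[OF eq] by fastforce
    obtain j0 where j0: "j0 \<in> J" "c j0 \<noteq> 0"
    proof (rule ccontr)
      assume "\<not> thesis"
      hence "\<forall>j\<in>J. c j = 0" using that by blast
      hence "\<gamma> = 0" using c(2) by simp
      thus False using groot root_nz by metis
    qed
    have j0I: "j0 \<in> I" using j0 JI by auto
    have cpos: "c j0 > 0" using c(1) j0 by force
    have Ez: "E j0 k = 0" if k: "k \<in> I" "k \<noteq> i" for k
    proof -
      have "\<forall>j\<in>J. c j * E j k = 0"
        using coef[OF k] sum_nonneg_eq_0_iff[OF finJ, of "\<lambda>j. c j * E j k"] c(1) E k(1)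
        by (simp add: mult_nonneg_nonneg)
      thus ?thesis using j0 cpos by force
    qed
    have "a (\<alpha> j0) = (\<Sum>k\<in>I. if k = i then E j0 i *\<^sub>R \<alpha> i else 0)"
      using E[OF j0(1)] by (auto intro!: sum.cong simp: Ez)
    also have "\<dots> = E j0 i *\<^sub>R \<alpha> i" using finI i by (simp add: sum.delta)
    finally have aj: "a (\<alpha> j0) = E j0 i *\<^sub>R \<alpha> i" .
    hence "E j0 i = 1 \<or> E j0 i = -1"
      using reduced[OF alpha_root[OF i]] weyl_root[OF aW alpha_root[OF j0I]] by simp
    moreover have "E j0 i \<ge> 0" using E[OF j0(1)] i by blast
    ultimately have aj0: "a (\<alpha> j0) = \<alpha> i" using aj by auto
    have "\<gamma> = \<alpha> j0" unfolding \<gamma>_def using ai(2) aj0 by (metis comp_apply id_apply)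
    hence invj: "inv a (\<alpha> i) = \<alpha> j0" using inva unfolding \<gamma>_def by simp
    have "a \<circ> sref \<alpha> j0 = sref \<alpha> i \<circ> a"
      using weyl_conj[OF aW, of "\<alpha> j0"] aj0 by (simp add: sref_def)
    hence "sref \<alpha> i \<circ> (a \<circ> b) = a \<circ> (sref \<alpha> j0 \<circ> b)" by (simp add: o_assoc)
    moreover have "sref \<alpha> j0 \<circ> b \<in> WJ" using weyl_comp[OF weyl_sref[OF j0(1)] bJ] .
    ultimately show ?thesis using aW pa invj j0(1)
      by (intro exI[of _ a] exI[of _ "sref \<alpha> j0 \<circ> b"] conjI disjI1 refl bexI[of _ j0]) assumption+
  qed
qed

end



context rsJ begin

lemma chain:
  shows "ws \<in> lists I \<Longrightarrow> a \<in> W \<Longrightarrow> Pj a \<Longrightarrow> b \<in> WJ \<Longrightarrow>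
    len \<alpha> I (word_eval \<alpha> ws \<circ> (a \<circ> b)) + length ws = len \<alpha> I (a \<circ> b) \<Longrightarrow> \<exists>a0 b0. a0 \<in> W \<and> Pj a0 \<and> b0 \<in> WJ \<and> word_eval \<alpha> ws \<circ> (a \<circ> b) = a0 \<circ> b0
     \<and> (a0, a) \<in> R\<^sup>* \<and> len \<alpha> I a0 \<le> len \<alpha> I a
     \<and> (len \<alpha> I a0 = len \<alpha> I a \<longrightarrow> a0 = a \<and> (\<forall>i\<in>set ws. \<exists>j\<in>J. inv a (\<alpha> i) = \<alpha> j))"
proof (induction ws)
  case Nil
  show ?case using Nil.prems
    by (intro exI[of _ a] exI[of _ b] conjI) auto
next
  case (Cons i rest)
  have i: "i \<in> I" and rI: "rest \<in> lists I" using Cons.prems by auto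
  have abW: "a \<circ> b \<in> W" using weyl_comp[OF Cons.prems(2) WJ_W[OF Cons.prems(4)]] .
  let ?z = "word_eval \<alpha> rest \<circ> (a \<circ> b)"
  have rW: "word_eval \<alpha> rest \<in> W" using rI unfolding weyl_def by blast
  have zW: "?z \<in> W" using weyl_comp[OF rW abW] .
  have si: "sref \<alpha> i \<in> W" using weyl_sref[OF i] .
  have e1: "word_eval \<alpha> (i # rest) \<circ> (a \<circ> b) = sref \<alpha> i \<circ> ?z" by (simp add: o_assoc)
  have h: "len \<alpha> I (sref \<alpha> i \<circ> ?z) + 1 + length rest = len \<alpha> I (a \<circ> b)"
  proof -
    have "length (i # rest) = length rest + 1" by simp
    thus ?thesis using Cons.prems(5) unfolding e1 by linarith
  qed
  have lsi: "len \<alpha> I (sref \<alpha> i) \<le> 1" using len_le[of "[i]" I \<alpha>] i by simp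
  have "?z = sref \<alpha> i \<circ> (sref \<alpha> i \<circ> ?z)" using sref_invol_o[OF i] by (simp add: o_assoc)
  hence "len \<alpha> I ?z \<le> len \<alpha> I (sref \<alpha> i) + len \<alpha> I (sref \<alpha> i \<circ> ?z)"
    using len_comp[OF si weyl_comp[OF si zW]] by simp
  hence h1: "len \<alpha> I ?z \<le> len \<alpha> I (sref \<alpha> i \<circ> ?z) + 1" using lsi by simp
  have rsI: "set rest \<subseteq> I" using rI by (simp add: in_lists_conv_set subset_iff)
  have rvW: "word_eval \<alpha> (rev rest) \<in> W" using rI unfolding weyl_def by (intro imageI) (simp add: in_lists_conv_set)
  have "a \<circ> b = word_eval \<alpha> (rev rest) \<circ> ?z"
    using word_rev_inv[OF rsI] by (simp add: o_assoc)
  hence "len \<alpha> I (a \<circ> b) \<le> len \<alpha> I (word_eval \<alpha> (rev rest)) + len \<alpha> I ?z"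
    using len_comp[OF rvW zW] by simp
  moreover have "len \<alpha> I (word_eval \<alpha> (rev rest)) \<le> length rest"
    using len_le[of "rev rest" I \<alpha>] rI by (simp add: in_lists_conv_set)
  ultimately have h2: "len \<alpha> I (a \<circ> b) \<le> len \<alpha> I ?z + length rest" by simp
  have hz: "len \<alpha> I ?z + length rest = len \<alpha> I (a \<circ> b)" using h h1 h2 by simp
  obtain a1 b1 where a1: "a1 \<in> W" "Pj a1" "b1 \<in> WJ" "?z = a1 \<circ> b1"
     "(a1, a) \<in> R\<^sup>*" "len \<alpha> I a1 \<le> len \<alpha> I a"
     "len \<alpha> I a1 = len \<alpha> I a \<longrightarrow> a1 = a \<and> (\<forall>i\<in>set rest. \<exists>j\<in>J. inv a (\<alpha> i) = \<alpha> j)"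
    using Cons.IH[OF rI Cons.prems(2-4) hz] by blast
  have "len \<alpha> I (sref \<alpha> i \<circ> (a1 \<circ> b1)) < len \<alpha> I (a1 \<circ> b1)"
    using h hz unfolding a1(4) by simp
  then obtain a' b' where a': "a' \<in> W" "Pj a'" "b' \<in> WJ" "sref \<alpha> i \<circ> (a1 \<circ> b1) = a' \<circ> b'"
     "(a' = a1 \<and> (\<exists>j\<in>J. inv a1 (\<alpha> i) = \<alpha> j)) \<or> (len \<alpha> I a' < len \<alpha> I a1 \<and> (a', a1) \<in> R)"
    using step[OF i a1(1) a1(2) a1(3)] by blast
  have eqf: "word_eval \<alpha> (i # rest) \<circ> (a \<circ> b) = a' \<circ> b'" using e1 a1(4) a'(4) by simp
  have Rs: "(a', a) \<in> R\<^sup>*" using a'(5) a1(5) by (meson converse_rtrancl_into_rtrancl)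
  have ll: "len \<alpha> I a' \<le> len \<alpha> I a" using a'(5) a1(6) by auto
  have lst: "len \<alpha> I a' = len \<alpha> I a \<longrightarrow> a' = a \<and> (\<forall>i\<in>set (i # rest). \<exists>j\<in>J. inv a (\<alpha> i) = \<alpha> j)"
  proof
    assume eq: "len \<alpha> I a' = len \<alpha> I a"
    hence "\<not> (len \<alpha> I a' < len \<alpha> I a1)" using a1(6) by simp
    hence A: "a' = a1" "\<exists>j\<in>J. inv a1 (\<alpha> i) = \<alpha> j" using a'(5) by auto
    hence "len \<alpha> I a1 = len \<alpha> I a" using eq by simp
    hence B: "a1 = a" "\<forall>i\<in>set rest. \<exists>j\<in>J. inv a (\<alpha> i) = \<alpha> j" using a1(7) by auto
    show "a' = a \<and> (\<forall>i\<in>set (i # rest). \<exists>j\<in>J. inv a (\<alpha> i) = \<alpha> j)"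
      using A B by simp
  qed
  show ?case using a'(1-3) eqf Rs ll lst
    by (intro exI[of _ a'] exI[of _ b'] conjI) assumption+
qed

end



context rsJ begin

lemma main_aux:
  assumes uW: "u \<in> W" and wm: "w \<in> min_reps \<alpha> I J" and vJ: "v \<in> WJ"
    and wm': "w' \<in> min_reps \<alpha> I J" and vJ': "v' \<in> WJ"
    and eq: "u \<circ> w \<circ> v = w' \<circ> v'"
    and ln: "len \<alpha> I (u \<circ> w \<circ> v) + len \<alpha> I u = len \<alpha> I (w \<circ> v)"
    and ws: "ws \<in> lists I" "length ws = len \<alpha> I u" "word_eval \<alpha> ws = u"
  shows "(w', w) \<in> R\<^sup>* \<and> (w' = w \<longrightarrow> (\<forall>i\<in>set ws. \<exists>j\<in>J. inv w (\<alpha> i) = \<alpha> j))"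
proof -
  have wW: "w \<in> W" using wm unfolding min_reps_def by blast
  have w'W: "w' \<in> W" using wm' unfolding min_reps_def by blast
  have e: "u \<circ> w \<circ> v = word_eval \<alpha> ws \<circ> (w \<circ> v)" using ws(3) by (simp add: o_assoc)
  have "len \<alpha> I (word_eval \<alpha> ws \<circ> (w \<circ> v)) + length ws = len \<alpha> I (w \<circ> v)"
    using ln unfolding e ws(2) .
  then obtain a0 b0 where a0: "a0 \<in> W" "Pj a0" "b0 \<in> WJ" "word_eval \<alpha> ws \<circ> (w \<circ> v) = a0 \<circ> b0"
     "(a0, w) \<in> R\<^sup>*" "len \<alpha> I a0 \<le> len \<alpha> I w"
     "len \<alpha> I a0 = len \<alpha> I w \<longrightarrow> a0 = w \<and> (\<forall>i\<in>set ws. \<exists>j\<in>J. inv w (\<alpha> i) = \<alpha> j)"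
    using chain[OF ws(1) wW minrep_Pj[OF wm] vJ] by blast
  obtain vi where vi: "vi \<in> WJ" "vi \<circ> v' = id" "v' \<circ> vi = id" using weyl_inv[OF vJ' JI] by blast
  have "w' = w' \<circ> v' \<circ> vi" using vi(3) by (simp add: o_assoc[symmetric])
  also have "\<dots> = a0 \<circ> (b0 \<circ> vi)" using eq e a0(4) by (simp add: o_assoc)
  finally have w'a: "w' = a0 \<circ> (b0 \<circ> vi)" .
  have cJ: "b0 \<circ> vi \<in> WJ" using weyl_comp[OF a0(3) vi(1)] .
  have "Pj (a0 \<circ> (b0 \<circ> vi))" using minrep_Pj[OF wm'] w'a by simp
  hence "b0 \<circ> vi = id" using unique_rep[OF a0(1) cJ a0(2)] by blast
  hence w'0: "w' = a0" using w'a by simp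
  show ?thesis using a0(5,7) w'0 by auto
qed

end

theorem lemma5p8:
  fixes \<Phi> :: "'a::euclidean_space set" and I J :: "'i set" and \<alpha> :: "'i \<Rightarrow> 'a"
    and u w v w' v' :: "'a \<Rightarrow> 'a"
  assumes "root_system \<Phi>" and "simple_system \<Phi> I \<alpha>"
    and "J \<subseteq> I"
    and "u \<in> weyl \<alpha> I" and "w \<in> min_reps \<alpha> I J" and "v \<in> weyl \<alpha> J"
    and "w' \<in> min_reps \<alpha> I J" and "v' \<in> weyl \<alpha> J"
    and "u \<circ> w \<circ> v = w' \<circ> v'"
    and "int (len \<alpha> I (u \<circ> w \<circ> v)) = int (len \<alpha> I (w \<circ> v)) - int (len \<alpha> I u)"
  shows "bruhat_le \<alpha> I w' w
    \<and> (w' = w \<longrightarrow> (\<lambda>i. inv w (\<alpha> i)) ` supp \<alpha> I u \<subseteq> \<alpha> ` J)"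
proof -
  interpret rsJ \<Phi> I \<alpha> J using assms(1-3) by unfold_locales
  have ln: "len \<alpha> I (u \<circ> w \<circ> v) + len \<alpha> I u = len \<alpha> I (w \<circ> v)" using assms(10) by linarith
  obtain ws where ws: "ws \<in> lists I" "length ws = len \<alpha> I u" "word_eval \<alpha> ws = u"
    using len_word[OF assms(4)] by blast
  have R: "(w', w) \<in> R\<^sup>*" using main_aux[OF assms(4-9) ln ws] by blast
  have wW: "w \<in> W" using assms(5) unfolding min_reps_def by blast
  have w'W: "w' \<in> W" using assms(7) unfolding min_reps_def by blast
  have B: "bruhat_le \<alpha> I w' w" unfolding bruhat_le_def using R wW w'W by blast
  have S: "(\<lambda>i. inv w (\<alpha> i)) ` supp \<alpha> I u \<subseteq> \<alpha> ` J" if "w' = w"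
  proof
    fix x assume "x \<in> (\<lambda>i. inv w (\<alpha> i)) ` supp \<alpha> I u"
    then obtain i where i: "i \<in> supp \<alpha> I u" "x = inv w (\<alpha> i)" by blast
    then obtain vs where vs: "vs \<in> lists I" "word_eval \<alpha> vs = u" "length vs = len \<alpha> I u" "i \<in> set vs"
      unfolding supp_def by blast
    have "\<forall>i\<in>set vs. \<exists>j\<in>J. inv w (\<alpha> i) = \<alpha> j"
      using main_aux[OF assms(4-9) ln vs(1) vs(3) vs(2)] that by blast
    thus "x \<in> \<alpha> ` J" using vs(4) i(2) by blast
  qed
  show ?thesis using B S by blast
qed


end
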